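(* Let $m\ge 0$ and call a square of type B$'$ any $4\times 4$ array with entries in $\{0,1,\dots,2^m-1\}$ whose first row and first column consist of zeros and in which every row and every column has bitwise XOR equal to $0$ (repetitions allowed). Then, up to applying an invertible affine transformation of $\mathbb{Z}_2^m$ to all entries (entries identified with vectors of $\mathbb{Z}_2^m$ via binary expansion), permuting the last three rows, permuting the last three columns, and reflecting along the main diagonal, every square of type B$'$ is one of the following ten arrays (rows listed top to bottom, separated by semicolons; only those whose entries are less than $2^m$ occur): (1) $0,0,0,0;\ 0,0,0,0;\ 0,0,0,0;\ 0,0,0,0$; (2) $0,0,0,0;\ 0,0,0,0;\ 0,0,1,1;\ 0,0,1,1$; (3) $0,0,0,0;\ 0,0,0,0;\ 0,1,2,3;\ 0,1,2,3$; (4) $0,0,0,0;\ 0,0,1,1;\ 0,1,0,1;\ 0,1,1,0$; (5) $0,0,0,0;\ 0,0,1,1;\ 0,1,2,3;\ 0,1,3,2$; (6) $0,0,0,0;\ 0,0,1,1;\ 0,2,0,2;\ 0,2,1,3$; (7) $0,0,0,0;\ 0,0,1,1;\ 0,2,4,6;\ 0,2,5,7$; (8) $0,0,0,0;\ 0,1,2,3;\ 0,2,3,1;\ 0,3,1,2$; (9) $0,0,0,0;\ 0,1,2,3;\ 0,2,4,6;\ 0,3,6,5$; (10) $0,0,0,0;\ 0,1,2,3;\ 0,4,8,12;\ 0,5,10,15$.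
   Context: Bitwise XOR of nonnegative integers is addition in $\mathbb{Z}_2^m$ of their binary expansions. Squares of type B$'$ are the squares of type B (in the EvenQuads-$2^{m+4}$ deck: arrays of multiples of $16$ with zero first row and column and all rows/columns XOR-ing to $0$) divided by $16$. *)

theory Defs
  imports Main "HOL-Combinatorics.Permutations"
begin

unbundle bit_operations_syntax

text \<open>A 4x4 array is a function nat => nat => nat, indices 0..3.
  Entries are naturals < 2^m, identified with vectors of Z_2^m via binary
  expansion; addition in Z_2^m is bitwise xor.\<close>

definition typeBprime :: "nat \<Rightarrow> (nat \<Rightarrow> nat \<Rightarrow> nat) \<Rightarrow> bool" where
  "typeBprime m S \<longleftrightarrow>
     (\<forall>i<4. \<forall>j<4. S i j < 2 ^ m) \<and>
     (\<forall>j<4. S 0 j = 0) \<and> (\<forall>i<4. S i 0 = 0) \<and>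
     (\<forall>i<4. S i 0 XOR S i 1 XOR S i 2 XOR S i 3 = 0) \<and>
     (\<forall>j<4. S 0 j XOR S 1 j XOR S 2 j XOR S 3 j = 0)"

text \<open>GF(2)-linear maps of Z_2^m (additivity suffices over GF(2)).\<close>
definition linear_Z2 :: "nat \<Rightarrow> (nat \<Rightarrow> nat) \<Rightarrow> bool" where
  "linear_Z2 m L \<longleftrightarrow>
     (\<forall>x<2^m. L x < 2^m) \<and> (\<forall>x<2^m. \<forall>y<2^m. L (x XOR y) = L x XOR L y)"

definition inv_affine_Z2 :: "nat \<Rightarrow> (nat \<Rightarrow> nat) \<Rightarrow> bool" where
  "inv_affine_Z2 m f \<longleftrightarrow>
     bij_betw f {..<2^m} {..<2^m} \<and>
     (\<exists>L c. linear_Z2 m L \<and> c < 2^m \<and> (\<forall>x<2^m. f x = L x XOR c))"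

definition squaresB :: "nat list list list" where
  "squaresB = [
    [[0,0,0,0],[0,0,0,0],[0,0,0,0],[0,0,0,0]],
    [[0,0,0,0],[0,0,0,0],[0,0,1,1],[0,0,1,1]],
    [[0,0,0,0],[0,0,0,0],[0,1,2,3],[0,1,2,3]],
    [[0,0,0,0],[0,0,1,1],[0,1,0,1],[0,1,1,0]],
    [[0,0,0,0],[0,0,1,1],[0,1,2,3],[0,1,3,2]],
    [[0,0,0,0],[0,0,1,1],[0,2,0,2],[0,2,1,3]],
    [[0,0,0,0],[0,0,1,1],[0,2,4,6],[0,2,5,7]],
    [[0,0,0,0],[0,1,2,3],[0,2,3,1],[0,3,1,2]],
    [[0,0,0,0],[0,1,2,3],[0,2,4,6],[0,3,6,5]],
    [[0,0,0,0],[0,1,2,3],[0,4,8,12],[0,5,10,15]]]"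

end

theory Submission
  imports Defs
begin

unbundle bit_operations_syntax

definition invlin :: "nat \<Rightarrow> (nat \<Rightarrow> nat) \<Rightarrow> bool" where
  "invlin m g \<longleftrightarrow> bij_betw g {..<2^m} {..<2^m} \<and> linear_Z2 m g"

lemma xor_less: "(x::nat) < 2^n \<Longrightarrow> y < 2^n \<Longrightarrow> x XOR y < 2^n"
  by (simp add: take_bit_nat_eq_self_iff[symmetric] take_bit_xor)

lemma less_pow_bit: "(x::nat) < 2^n \<Longrightarrow> n \<le> p \<Longrightarrow> \<not> bit x p"
  by (metis bit_take_bit_iff not_less take_bit_nat_eq_self_iff)

lemma ge_pow_bit: "\<not> (x::nat) < 2^n \<Longrightarrow> \<exists>p\<ge>n. bit x p"
proof -
  assume "\<not> x < 2^n"
  then have "take_bit n x \<noteq> x" by (simp add: take_bit_nat_eq_self_iff)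
  then obtain p where "bit (take_bit n x) p \<noteq> bit x p" using bit_eqI by blast
  then show ?thesis by (metis bit_take_bit_iff not_less)
qed

lemma bit_less_pow: "(x::nat) < 2^m \<Longrightarrow> bit x p \<Longrightarrow> p < m"
  using less_pow_bit not_less by blast

lemma invlin_id: "invlin m id"
  by (simp add: invlin_def linear_Z2_def)

lemma invlin_comp: "invlin m f \<Longrightarrow> invlin m g \<Longrightarrow> invlin m (g \<circ> f)"
  unfolding invlin_def linear_Z2_def
  by (auto intro: bij_betw_trans simp: xor_less)

lemma invlin_lt: "invlin m f \<Longrightarrow> x < 2^m \<Longrightarrow> f x < 2^m"
  by (simp add: invlin_def linear_Z2_def)

lemma invlin_xor: "invlin m f \<Longrightarrow> x < 2^m \<Longrightarrow> y < 2^m \<Longrightarrow> f (x XOR y) = f x XOR f y"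
  by (simp add: invlin_def linear_Z2_def)

lemma invlin_0: "invlin m f \<Longrightarrow> f 0 = 0"
  using invlin_xor[of m f 0 0] by simp

lemma invlin_inj: "invlin m f \<Longrightarrow> x < 2^m \<Longrightarrow> y < 2^m \<Longrightarrow> f x = f y \<Longrightarrow> x = y"
  unfolding invlin_def bij_betw_def inj_on_def by auto

lemma transv:
  assumes phi: "\<And>x y. \<phi> (x XOR y) = (\<phi> x \<noteq> \<phi> y)" and u: "\<not> \<phi> u" "u < 2^m"
  shows "invlin m (\<lambda>x. if \<phi> x then x XOR u else x)"
proof -
  define T where "T = (\<lambda>x. if \<phi> x then x XOR u else x)"
  have T_lt: "T x < 2^m" if "x < 2^m" for x using that u xor_less by (simp add: T_def)
  have TT: "T (T x) = x" for x
    using phi[of x u] u by (auto simp: T_def xor.assoc)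
  have lin: "T (x XOR y) = T x XOR T y" for x y
    using phi[of x y] by (auto simp: T_def intro!: bit_eqI simp: bit_xor_iff)
  have "bij_betw T {..<2^m} {..<2^m}"
    by (rule bij_betw_byWitness[where f'=T]) (auto simp: TT T_lt)
  then show ?thesis using T_lt lin unfolding invlin_def linear_Z2_def T_def by auto
qed

lemma step0:
  assumes v: "v < 2^m" "\<not> v < 2^r"
  shows "\<exists>h. invlin m h \<and> (\<forall>x<2^r. h x = x) \<and> h v = 2^r"
proof -
  obtain p where p: "p \<ge> r" "bit v p" using ge_pow_bit v(2) by blast
  have pm: "p < m" using bit_less_pow v(1) p(2) .
  have rm: "r < m" using p pm by simp
  define u1 where "u1 = (if p = r then 0 else 2^p XOR 2^r :: nat)"
  define h1 where "h1 = (\<lambda>x. if (bit x p \<noteq> bit x r) then x XOR u1 else x)"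
  have inv1: "invlin m h1" unfolding h1_def
  proof (rule transv)
    show "\<And>x y. (bit (x XOR y) p \<noteq> bit (x XOR y) r) = ((bit x p \<noteq> bit x r) \<noteq> (bit y p \<noteq> bit y r))"
      by (auto simp: bit_xor_iff)
    show "\<not> (bit u1 p \<noteq> bit u1 r)" by (auto simp: u1_def bit_xor_iff bit_exp_iff)
    have "(2::nat)^p < 2^m" "(2::nat)^r < 2^m" using pm rm by auto
    then show "u1 < 2^m" by (auto simp: u1_def xor_less)
  qed
  have fix1: "h1 x = x" if "x < 2^r" for x
    using less_pow_bit[OF that, of p] less_pow_bit[OF that, of r] p by (simp add: h1_def)
  define w where "w = h1 v"
  have wr: "bit w r"
    using p by (auto simp: w_def h1_def u1_def bit_xor_iff bit_exp_iff)
  have wm: "w < 2^m" using invlin_lt[OF inv1 v(1)] by (simp add: w_def)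
  define u2 where "u2 = w XOR 2^r"
  define h2 where "h2 = (\<lambda>x. if bit x r then x XOR u2 else x)"
  have inv2: "invlin m h2" unfolding h2_def
  proof (rule transv)
    show "\<And>x y. bit (x XOR y) r = (bit x r \<noteq> bit y r)" by (simp add: bit_xor_iff)
    show "\<not> bit u2 r" using wr by (simp add: u2_def bit_xor_iff bit_exp_iff)
    have "(2::nat)^r < 2^m" using rm by auto
    then show "u2 < 2^m" using wm by (simp add: u2_def xor_less)
  qed
  have fix2: "h2 x = x" if "x < 2^r" for x
    using less_pow_bit[OF that, of r] by (simp add: h2_def)
  have "h2 w = 2^r" using wr by (simp add: h2_def u2_def flip: xor.assoc)
  then show ?thesis using invlin_comp[OF inv1 inv2] fix1 fix2
    by (intro exI[of _ "h2 \<circ> h1"]) (auto simp: w_def)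
qed

lemma extend:
  assumes f: "invlin m f" and a: "a < 2^m"
  shows "\<exists>g. invlin m g \<and> (\<forall>y<2^m. f y < 2^r \<longrightarrow> g y = f y) \<and> (g a < 2^r \<or> g a = 2^r)"
proof (cases "f a < 2^r")
  case True then show ?thesis using f by blast
next
  case False
  obtain h where h: "invlin m h" "\<forall>x<2^r. h x = x" "h (f a) = 2^r"
    using step0[OF invlin_lt[OF f a] False] by blast
  show ?thesis using invlin_comp[OF f h(1)] h by (intro exI[of _ "h \<circ> f"]) auto
qed

fun ech :: "nat \<Rightarrow> nat list \<Rightarrow> bool" where
  "ech r [] = True"
| "ech r (c#cs) = ((c < 2^r \<and> ech r cs) \<or> (c = 2^r \<and> ech (Suc r) cs))"

lemma ech_exists:
  "set as \<subseteq> {..<2^m} \<Longrightarrow> invlin m f \<Longrightarrow>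
   \<exists>g. invlin m g \<and> (\<forall>y<2^m. f y < 2^r \<longrightarrow> g y = f y) \<and> ech r (map g as)"
proof (induction as arbitrary: f r)
  case Nil then show ?case by (intro exI[of _ f]) auto
next
  case (Cons a as)
  obtain g1 where g1: "invlin m g1" "\<forall>y<2^m. f y < 2^r \<longrightarrow> g1 y = f y" "g1 a < 2^r \<or> g1 a = 2^r"
    using extend[of m f a r] Cons.prems by auto
  show ?case
  proof (cases "g1 a < 2^r")
    case True
    obtain g2 where g2: "invlin m g2" "\<forall>y<2^m. g1 y < 2^r \<longrightarrow> g2 y = g1 y" "ech r (map g2 as)"
      using Cons.IH[of g1 r] Cons.prems g1(1) by auto
    have "g2 a = g1 a" using g2(2) True Cons.prems by auto
    then show ?thesis using g1 g2 True by (intro exI[of _ g2]) auto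
  next
    case False
    then have eq: "g1 a = 2^r" using g1(3) by auto
    obtain g2 where g2: "invlin m g2" "\<forall>y<2^m. g1 y < 2^Suc r \<longrightarrow> g2 y = g1 y" "ech (Suc r) (map g2 as)"
      using Cons.IH[of g1 "Suc r"] Cons.prems g1(1) by auto
    have "g2 a = g1 a" using g2(2) eq Cons.prems by auto
    moreover have "\<forall>y<2^m. f y < 2^r \<longrightarrow> g2 y = f y"
    proof (intro allI impI)
      fix y assume y: "y < 2^m" "f y < 2^r"
      then have "g1 y = f y" using g1(2) by auto
      moreover have "(2::nat)^r < 2^Suc r" by simp
      ultimately show "g2 y = f y" using g2(2) y by (metis order.strict_trans)
    qed
    ultimately show ?thesis using g2 eq by (intro exI[of _ g2]) auto
  qed
qed

definition sel :: "bool \<Rightarrow> nat \<Rightarrow> nat" where "sel b x = (if b then x else 0)"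

definition subs16 :: "(bool \<times> bool \<times> bool \<times> bool) list" where
  "subs16 = [(a,b,c,e). a \<leftarrow> [False,True], b \<leftarrow> [False,True], c \<leftarrow> [False,True], e \<leftarrow> [False,True]]"

definition pat :: "nat list \<Rightarrow> bool list" where
  "pat d = map (\<lambda>(a,b,c,e). (sel a (d!0) XOR sel b (d!1) XOR sel c (d!2) XOR sel e (d!3)) = 0) subs16"

definition sq :: "nat list \<Rightarrow> nat \<Rightarrow> nat \<Rightarrow> nat" where
  "sq d i j = (if i = 1 \<and> j = 1 then d!0 else if i = 1 \<and> j = 2 then d!1
     else if i = 1 \<and> j = 3 then d!0 XOR d!1
     else if i = 2 \<and> j = 1 then d!2 else if i = 2 \<and> j = 2 then d!3
     else if i = 2 \<and> j = 3 then d!2 XOR d!3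
     else if i = 3 \<and> j = 1 then d!0 XOR d!2 else if i = 3 \<and> j = 2 then d!1 XOR d!3
     else if i = 3 \<and> j = 3 then d!0 XOR d!1 XOR d!2 XOR d!3 else 0)"

definition pf :: "nat list \<Rightarrow> nat \<Rightarrow> nat" where
  "pf p i = (if i = 1 then p!0 else if i = 2 then p!1 else if i = 3 then p!2 else i)"

definition perms6 :: "nat list list" where
  "perms6 = [[1,2,3],[1,3,2],[2,1,3],[2,3,1],[3,1,2],[3,2,1]]"

definition Cp :: "nat list \<Rightarrow> nat list \<Rightarrow> nat list \<Rightarrow> bool \<Rightarrow> nat \<Rightarrow> nat \<Rightarrow> nat" where
  "Cp c p q t i j = (if t then sq c (pf p j) (pf q i) else sq c (pf p i) (pf q j))"

definition blkC :: "nat list \<Rightarrow> nat list \<Rightarrow> nat list \<Rightarrow> bool \<Rightarrow> nat list" where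
  "blkC c p q t = [Cp c p q t 1 1, Cp c p q t 1 2, Cp c p q t 2 1, Cp c p q t 2 2]"

definition blkB :: "nat \<Rightarrow> nat list" where
  "blkB k = [squaresB!k!1!1, squaresB!k!1!2, squaresB!k!2!1, squaresB!k!2!2]"

definition idx4 :: "nat list" where "idx4 = [0,1,2,3]"

definition check :: "nat list \<times> nat list \<times> nat list \<times> bool \<times> nat \<Rightarrow> bool" where
  "check e = (case e of (c,p,q,t,k) \<Rightarrow> p \<in> set perms6 \<and> q \<in> set perms6 \<and> k < 10 \<and>
     list_all (\<lambda>i. list_all (\<lambda>j. Cp c p q t i j = sq (blkC c p q t) i j) idx4) idx4 \<and>
     pat (blkC c p q t) = pat (blkB k))"

definition Wl :: "(nat list \<times> nat list \<times> nat list \<times> bool \<times> nat) list" where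
  "Wl = [([0,0,0,0],[1,2,3],[1,2,3],False,0),
   ([0,0,0,1],[1,2,3],[1,2,3],False,1),
   ([0,0,1,0],[1,2,3],[2,1,3],False,1),
   ([0,0,1,1],[1,2,3],[3,1,2],False,1),
   ([0,0,1,2],[1,2,3],[1,2,3],False,2),
   ([0,1,0,0],[2,1,3],[1,2,3],False,1),
   ([0,1,0,1],[3,1,2],[1,2,3],False,1),
   ([0,1,0,2],[1,2,3],[1,2,3],True,2),
   ([0,1,1,0],[1,2,3],[1,2,3],False,3),
   ([0,1,1,1],[1,2,3],[1,3,2],False,3),
   ([0,1,1,2],[1,2,3],[1,2,3],False,4),
   ([0,1,2,0],[1,2,3],[1,2,3],False,5),
   ([0,1,2,1],[1,3,2],[1,2,3],False,5),
   ([0,1,2,2],[1,2,3],[1,3,2],False,5),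
   ([0,1,2,3],[1,3,2],[1,3,2],False,5),
   ([0,1,2,4],[1,2,3],[1,2,3],False,6),
   ([1,0,0,0],[2,1,3],[2,1,3],False,1),
   ([1,0,0,1],[1,2,3],[2,1,3],False,3),
   ([1,0,0,2],[1,2,3],[2,1,3],False,5),
   ([1,0,1,0],[3,1,2],[2,1,3],False,1),
   ([1,0,1,1],[1,2,3],[2,3,1],False,3),
   ([1,0,1,2],[1,3,2],[2,1,3],False,5),
   ([1,0,2,0],[1,2,3],[2,1,3],True,2),
   ([1,0,2,1],[1,2,3],[2,1,3],False,4),
   ([1,0,2,2],[1,2,3],[2,3,1],False,5),
   ([1,0,2,3],[1,3,2],[2,3,1],False,5),
   ([1,0,2,4],[1,2,3],[2,1,3],False,6),
   ([1,1,0,0],[2,1,3],[3,1,2],False,1),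
   ([1,1,0,1],[1,2,3],[3,1,2],False,3),
   ([1,1,0,2],[1,2,3],[3,1,2],False,5),
   ([1,1,1,0],[1,2,3],[3,2,1],False,3),
   ([1,1,1,1],[3,1,2],[3,1,2],False,1),
   ([1,1,1,2],[1,3,2],[3,1,2],False,5),
   ([1,1,2,0],[1,2,3],[3,2,1],False,5),
   ([1,1,2,1],[1,3,2],[3,2,1],False,5),
   ([1,1,2,2],[1,2,3],[3,1,2],True,2),
   ([1,1,2,3],[1,2,3],[3,1,2],False,4),
   ([1,1,2,4],[1,2,3],[3,1,2],False,6),
   ([1,2,0,0],[2,1,3],[1,2,3],False,2),
   ([1,2,0,1],[2,1,3],[1,2,3],False,4),
   ([1,2,0,2],[2,3,1],[1,2,3],False,5),
   ([1,2,0,3],[2,3,1],[1,3,2],False,5),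
   ([1,2,0,4],[2,1,3],[1,2,3],False,6),
   ([1,2,1,0],[2,3,1],[2,1,3],False,5),
   ([1,2,1,1],[2,3,1],[3,1,2],False,5),
   ([1,2,1,2],[3,1,2],[1,2,3],False,2),
   ([1,2,1,3],[3,1,2],[1,2,3],False,4),
   ([1,2,1,4],[3,1,2],[1,2,3],False,6),
   ([1,2,2,0],[2,1,3],[2,1,3],False,4),
   ([1,2,2,1],[3,1,2],[3,1,2],False,4),
   ([1,2,2,2],[2,3,1],[3,2,1],False,5),
   ([1,2,2,3],[1,2,3],[1,2,3],False,7),
   ([1,2,2,4],[1,2,3],[1,2,3],False,8),
   ([1,2,3,0],[2,3,1],[2,3,1],False,5),
   ([1,2,3,1],[1,2,3],[1,3,2],False,7),
   ([1,2,3,2],[3,1,2],[2,1,3],False,4),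
   ([1,2,3,3],[2,1,3],[3,1,2],False,4),
   ([1,2,3,4],[1,2,3],[1,3,2],False,8),
   ([1,2,4,0],[2,1,3],[2,1,3],False,6),
   ([1,2,4,1],[1,2,3],[2,1,3],False,8),
   ([1,2,4,2],[3,1,2],[2,1,3],False,6),
   ([1,2,4,3],[1,2,3],[2,3,1],False,8),
   ([1,2,4,4],[2,1,3],[3,1,2],False,6),
   ([1,2,4,5],[1,2,3],[3,1,2],False,8),
   ([1,2,4,6],[1,2,3],[3,2,1],False,8),
   ([1,2,4,7],[3,1,2],[3,1,2],False,6),
   ([1,2,4,8],[1,2,3],[1,2,3],False,9)]"

definition Elist :: "nat list list" where "Elist = map fst Wl"


lemma G4: "list_all check Wl" by code_simp
lemma G3: "distinct (map pat Elist)" by code_simp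
lemma G1: "list_all (\<lambda>k. list_all (\<lambda>i. list_all (\<lambda>j. squaresB!k!i!j = sq (blkB k) i j) idx4) idx4 \<and> blkB k \<in> set Elist) [0..<10]" by code_simp

lemma lt1: "(x::nat) < 1 \<longleftrightarrow> x = 0" by auto
lemma lt2: "(x::nat) < 2 \<longleftrightarrow> x = 0 \<or> x = 1" by auto
lemma lt4: "(x::nat) < 4 \<longleftrightarrow> x = 0 \<or> x = 1 \<or> x = 2 \<or> x = 3" by auto
lemma lt8: "(x::nat) < 8 \<longleftrightarrow> x = 0 \<or> x = 1 \<or> x = 2 \<or> x = 3 \<or> x = 4 \<or> x = 5 \<or> x = 6 \<or> x = 7" by auto

lemma G2: "ech 0 [a,b,c,d] \<Longrightarrow> [a,b,c,d] \<in> set Elist"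
  apply (simp only: ech.simps)
  apply (simp add: lt1 lt2 lt4 lt8)
  apply (elim disjE conjE)
  apply (simp_all add: Elist_def Wl_def)
  done

lemma idx4_iff: "i \<in> set idx4 \<longleftrightarrow> i < (4::nat)"
  by (auto simp: idx4_def)

lemma pf_permutes: "p \<in> set perms6 \<Longrightarrow> pf p permutes {1,2,3}"
  apply (rule bij_imp_permutes)
   apply (auto simp: perms6_def pf_def bij_betw_def inj_on_def)
  done

lemma pf_lt4: "p \<in> set perms6 \<Longrightarrow> i < 4 \<Longrightarrow> pf p i < 4"
  by (auto simp: perms6_def pf_def)

lemma sq_lin:
  assumes f: "invlin m f" and lt: "a < 2^m" "b < 2^m" "c < 2^m" "e < 2^m"
  shows "f (sq [a,b,c,e] i j) = sq [f a, f b, f c, f e] i j"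
  using lt by (simp add: sq_def invlin_xor[OF f] xor_less invlin_0[OF f])

lemma sq_lt:
  assumes lt: "a < 2^m" "b < 2^m" "c < 2^m" "e < 2^m"
  shows "sq [a,b,c,e] i j < 2^m"
  using lt by (simp add: sq_def xor_less)

lemma pat_pres:
  assumes f: "invlin m f" and lt: "a < 2^m" "b < 2^m" "c < 2^m" "e < 2^m"
  shows "pat [f a, f b, f c, f e] = pat [a,b,c,e]"
proof -
  have sl: "sel x y < 2^m" if "y<2^m" for x y using that by (simp add: sel_def)
  have fs: "f (sel x y) = sel x (f y)" for x y using invlin_0[OF f] by (simp add: sel_def)
  have z: "(f u = 0) = (u = 0)" if "u < 2^m" for u
    using invlin_inj[OF f that, of 0] invlin_0[OF f] by auto
  have each: "(sel x1 (f a) XOR sel x2 (f b) XOR sel x3 (f c) XOR sel x4 (f e) = 0) =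
     (sel x1 a XOR sel x2 b XOR sel x3 c XOR sel x4 e = 0)" for x1 x2 x3 x4
  proof -
    have u: "sel x1 a XOR sel x2 b XOR sel x3 c XOR sel x4 e < 2^m" using lt by (simp add: xor_less sl)
    have "f (sel x1 a XOR sel x2 b XOR sel x3 c XOR sel x4 e) = sel x1 (f a) XOR sel x2 (f b) XOR sel x3 (f c) XOR sel x4 (f e)"
      using lt by (simp add: invlin_xor[OF f] xor_less sl fs)
    then show ?thesis using z[OF u] by simp
  qed
  show ?thesis unfolding pat_def by (simp add: each split_def)
qed

lemma x3: "(a::nat) XOR b XOR c = 0 \<Longrightarrow> c = a XOR b"
proof (rule bit_eqI)
  fix n assume h: "(a::nat) XOR b XOR c = 0"
  have "bit (a XOR b XOR c) n = bit (0::nat) n" using h by simp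
  then show "bit c n = bit (a XOR b) n" by (auto simp: bit_xor_iff)
qed

lemma typeB_sq:
  assumes S: "typeBprime m S" and ij: "i < 4" "j < 4"
  shows "S i j = sq [S 1 1, S 1 2, S 2 1, S 2 2] i j"
proof -
  have r0: "S i 0 = 0" if "i<4" for i using S that by (simp add: typeBprime_def)
  have c0: "S 0 j = 0" if "j<4" for j using S that by (simp add: typeBprime_def)
  have row: "S i 1 XOR S i 2 XOR S i 3 = 0" if "i<4" for i
  proof -
    have "S i 0 XOR S i 1 XOR S i 2 XOR S i 3 = 0" using S that unfolding typeBprime_def by blast
    then show ?thesis using r0[OF that] by simp
  qed
  have col: "S 1 j XOR S 2 j XOR S 3 j = 0" if "j<4" for j
  proof -
    have "S 0 j XOR S 1 j XOR S 2 j XOR S 3 j = 0" using S that unfolding typeBprime_def by blast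
    then show ?thesis using c0[OF that] by simp
  qed
  have a13: "S 1 3 = S 1 1 XOR S 1 2" using row[of 1] by (intro x3) simp
  have a23: "S 2 3 = S 2 1 XOR S 2 2" using row[of 2] by (intro x3) simp
  have a31: "S 3 1 = S 1 1 XOR S 2 1" using col[of 1] by (intro x3) simp
  have a32: "S 3 2 = S 1 2 XOR S 2 2" using col[of 2] by (intro x3) simp
  have a33: "S 3 3 = S 1 3 XOR S 2 3" using col[of 3] by (intro x3) simp
  have a33': "S 3 3 = S 1 1 XOR S 1 2 XOR S 2 1 XOR S 2 2"
    using a33 a13 a23 by (simp add: xor.assoc)
  from ij have "i = 0 \<or> i = 1 \<or> i = 2 \<or> i = 3" "j = 0 \<or> j = 1 \<or> j = 2 \<or> j = 3" by auto
  then show ?thesis using r0 c0 a13 a23 a31 a32 a33'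
    by (auto simp: sq_def)
qed

lemma final:
  assumes S: "typeBprime m S" and f: "invlin m f"
    and fS: "\<And>i j. i<4 \<Longrightarrow> j<4 \<Longrightarrow> f (S i j) = sq c i j"
    and chk: "check (c,p,q,t,k)"
  shows "\<exists>f \<sigma> \<tau> (t::bool) k. inv_affine_Z2 m f \<and>
           \<sigma> permutes {1,2,3} \<and> \<tau> permutes {1,2,3} \<and> k < 10 \<and>
           (\<forall>i<4. \<forall>j<4.
              f (if t then S (\<sigma> j) (\<tau> i) else S (\<sigma> i) (\<tau> j))
                = squaresB ! k ! i ! j)"
proof -
  from chk have p: "p \<in> set perms6" and q: "q \<in> set perms6" and k: "k<10"
    and cst: "\<And>i j. i<4 \<Longrightarrow> j<4 \<Longrightarrow> Cp c p q t i j = sq (blkC c p q t) i j"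
    and cpat: "pat (blkC c p q t) = pat (blkB k)"
    by (auto simp: check_def list_all_iff idx4_iff)
  define S' where "S' = (\<lambda>i j. if t then S (pf p j) (pf q i) else S (pf p i) (pf q j))"
  have Slt: "S i j < 2^m" if "i<4" "j<4" for i j using S that by (simp add: typeBprime_def)
  have S'lt: "S' i j < 2^m" if "i<4" "j<4" for i j
    using that Slt pf_lt4[OF p] pf_lt4[OF q] by (simp add: S'_def)
  have fS': "f (S' i j) = Cp c p q t i j" if "i<4" "j<4" for i j
    using that fS pf_lt4[OF p] pf_lt4[OF q] by (simp add: S'_def Cp_def)
  define d where "d = [S' 1 1, S' 1 2, S' 2 1, S' 2 2]"
  have dl: "S' 1 1 < 2^m" "S' 1 2 < 2^m" "S' 2 1 < 2^m" "S' 2 2 < 2^m" using S'lt by auto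
  have dlt: "set d \<subseteq> {..<2^m}" using dl by (auto simp: d_def)
  have fd: "map f d = blkC c p q t" using fS' by (simp add: d_def blkC_def)
  have S'sq: "S' i j = sq d i j" if ij: "i<4" "j<4" for i j
  proof -
    have "f (S' i j) = sq (blkC c p q t) i j" using fS' cst ij by simp
    also have "\<dots> = sq (map f d) i j" using fd by simp
    also have "\<dots> = f (sq d i j)" unfolding d_def using sq_lin[OF f dl] by simp
    finally have "f (S' i j) = f (sq d i j)" .
    then show ?thesis using invlin_inj[OF f S'lt[OF ij]] sq_lt[OF dl] by (simp add: d_def)
  qed
  obtain g where g: "invlin m g" "ech 0 (map g d)" using ech_exists[OF dlt invlin_id] by blast
  have "pat (map g d) = pat d" unfolding d_def using pat_pres[OF g(1) dl] by simp
  also have "\<dots> = pat (map f d)" unfolding d_def using pat_pres[OF f dl] by simp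
  finally have pg: "pat (map g d) = pat (blkB k)" using fd cpat by simp
  have gE: "map g d \<in> set Elist" using G2 g(2) by (simp add: d_def)
  have G1k: "list_all (\<lambda>i. list_all (\<lambda>j. squaresB!k!i!j = sq (blkB k) i j) idx4) idx4 \<and> blkB k \<in> set Elist"
    using G1 k by (simp add: list_all_iff)
  have "inj_on pat (set Elist)" using G3 by (simp add: distinct_map)
  then have gd: "map g d = blkB k" using gE G1k pg by (auto dest: inj_onD)
  have sqB: "squaresB!k!i!j = sq (blkB k) i j" if "i<4" "j<4" for i j
    using G1k that by (simp add: list_all_iff idx4_iff)
  have res: "g (S' i j) = squaresB!k!i!j" if ij: "i<4" "j<4" for i j
  proof -
    have gl: "g (sq d i j) = sq (map g d) i j" unfolding d_def using sq_lin[OF g(1) dl] by simp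
    show ?thesis using S'sq[OF ij] gl gd sqB[OF ij] by simp
  qed
  have aff: "inv_affine_Z2 m g"
    using g(1) unfolding invlin_def inv_affine_Z2_def by (intro conjI exI[of _ g] exI[of _ 0]) auto
  show ?thesis
    apply (rule exI[of _ g], rule exI[of _ "pf p"], rule exI[of _ "pf q"], rule exI[of _ t], rule exI[of _ k])
    using aff pf_permutes[OF p] pf_permutes[OF q] k res by (simp add: S'_def)
qed

theorem mainTheorem6:
  fixes m :: nat and S :: "nat \<Rightarrow> nat \<Rightarrow> nat"
  assumes "typeBprime m S"
  shows "\<exists>f \<sigma> \<tau> (t::bool) k. inv_affine_Z2 m f \<and>
           \<sigma> permutes {1,2,3} \<and> \<tau> permutes {1,2,3} \<and> k < 10 \<and>
           (\<forall>i<4. \<forall>j<4.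
              f (if t then S (\<sigma> j) (\<tau> i) else S (\<sigma> i) (\<tau> j))
                = squaresB ! k ! i ! j)"
proof -
  have al: "S 1 1 < 2^m" "S 1 2 < 2^m" "S 2 1 < 2^m" "S 2 2 < 2^m"
    using assms by (auto simp: typeBprime_def)
  define a where "a = [S 1 1, S 1 2, S 2 1, S 2 2]"
  have alt: "set a \<subseteq> {..<2^m}" using al by (auto simp: a_def)
  obtain f where f: "invlin m f" "ech 0 (map f a)" using ech_exists[OF alt invlin_id] by blast
  have "map f a \<in> set Elist" using G2 f(2) by (simp add: a_def)
  then obtain e where e: "e \<in> set Wl" "fst e = map f a" by (auto simp: Elist_def)
  obtain c p q t k where ee: "e = (c,p,q,t,k)" by (cases e) auto
  have chk: "check (c,p,q,t,k)" using G4 e(1) ee by (simp add: list_all_iff)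
  have cdef: "c = map f a" using e(2) ee by simp
  have fS: "f (S i j) = sq c i j" if "i<4" "j<4" for i j
    using typeB_sq[OF assms that] sq_lin[OF f(1) al] by (simp add: cdef a_def)
  show ?thesis by (rule final[OF assms f(1) fS chk])
qed

end
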